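(* Let $\Lambda>1$. Then there exists at most one solution, modulo translations in $z$, of \[ -v_1''+v_1^3-v_1+\Lambda v_2^2v_1=0,\qquad -v_2''+v_2^3-v_2+\Lambda v_1^2v_2=0,\qquad z\in\mathbb{R}, \] \[ (v_1,v_2)\to(0,1)\ \text{as } z\to-\infty,\qquad (v_1,v_2)\to(1,0)\ \text{as } z\to+\infty, \] such that both $v_1$ and $v_2$ are positive and at least one of $v_1,v_2$ is strictly monotone on $\mathbb{R}$. *)

theory Defs
  imports "HOL-Analysis.Analysis"
begin

definition strictly_monotone :: "(real \<Rightarrow> real) \<Rightarrow> bool" where
  "strictly_monotone v \<longleftrightarrow>
     (\<forall>x y. x < y \<longrightarrow> v x < v y) \<or> (\<forall>x y. x < y \<longrightarrow> v x > v y)"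

definition is_system_solution :: "real \<Rightarrow> (real \<Rightarrow> real) \<Rightarrow> (real \<Rightarrow> real) \<Rightarrow> bool" where
  "is_system_solution L v1 v2 \<longleftrightarrow>
     (\<exists>d1 dd1 d2 dd2.
        \<forall>z. (v1 has_real_derivative d1 z) (at z) \<and> (d1 has_real_derivative dd1 z) (at z) \<and>
            (v2 has_real_derivative d2 z) (at z) \<and> (d2 has_real_derivative dd2 z) (at z) \<and>
            - dd1 z + (v1 z)^3 - v1 z + L * (v2 z)^2 * v1 z = 0 \<and>
            - dd2 z + (v2 z)^3 - v2 z + L * (v1 z)^2 * v2 z = 0)"

definition admissible :: "real \<Rightarrow> (real \<Rightarrow> real) \<Rightarrow> (real \<Rightarrow> real) \<Rightarrow> bool" where
  "admissible L v1 v2 \<longleftrightarrow>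
     is_system_solution L v1 v2 \<and>
     (v1 \<longlongrightarrow> 0) at_bot \<and> (v2 \<longlongrightarrow> 1) at_bot \<and>
     (v1 \<longlongrightarrow> 1) at_top \<and> (v2 \<longlongrightarrow> 0) at_top \<and>
     (\<forall>z. v1 z > 0 \<and> v2 z > 0) \<and>
     (strictly_monotone v1 \<or> strictly_monotone v2)"

end

theory Submission
  imports Defs
begin


definition br :: "real \<Rightarrow> real \<Rightarrow> real \<Rightarrow> real \<Rightarrow> real" where
  "br L A B t = 1 - 3*A^2 + 3*A*t - t^2 + L*(2*A*B - B^2 - 2*B*t + A*t - t^2)"

lemma pm: fixes x y X Y :: real shows "0 \<le> x \<Longrightarrow> x \<le> X \<Longrightarrow> 0 \<le> y \<Longrightarrow> y \<le> Y \<Longrightarrow> x*y \<le> X*Y"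
  by (meson mult_mono order_trans)

lemma d_small: fixes L d :: real assumes "L > 1" "d > 0" "100*L*d \<le> 1" shows "d \<le> 1/100" "L*d \<le> 1/100" "d \<le> L*d"
proof -
  show 1: "d \<le> L*d" using assms by simp
  have "100*(L*d) \<le> 1" using assms(3) by (simp add: mult.assoc)
  thus "L*d \<le> 1/100" by simp
  thus "d \<le> 1/100" using 1 by simp
qed

lemma bracketL:
  fixes L A B t d :: real
  assumes "L > 1" "d > 0" "100*L*d \<le> 1" "100*L*d \<le> L - 1"
    "0 \<le> A" "A \<le> d" "\<bar>B - 1\<bar> \<le> d" "0 \<le> t" "t \<le> d"
  shows "br L A B t < 0"
proof -
  have d1: "d \<le> 1/100" by (rule d_small(1)[OF assms(1,2,3)])
  have Bp: "0 \<le> B" "B \<le> 2" "1 - d \<le> B" using assms d1 by auto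
  have "(1-d)^2 \<le> B^2" using Bp d1 by (intro power_mono) auto
  moreover have "(1-d)^2 = 1 - 2*d + d^2" by (simp add: power2_eq_square algebra_simps)
  ultimately have "1 - 2*d \<le> B^2" using zero_le_power2[of d] by linarith
  hence "L*(1-2*d) \<le> L*B^2" using assms by (intro mult_left_mono) auto
  hence e1: "L - 2*(L*d) \<le> L*B^2" by (simp add: right_diff_distrib)
  have e2: "A*t \<le> d" using pm[of A d t 1] assms d1 by auto
  have e3: "A*B \<le> d*2" using pm[of A d B 2] assms Bp by auto
  have e4: "L*(A*B) \<le> L*(d*2)" using e3 assms by (intro mult_left_mono) auto
  have e5: "L*(A*t) \<le> L*d" using e2 assms by (intro mult_left_mono) auto
  have e6: "0 \<le> L*(B*t)" "0 \<le> L*t^2" "0 \<le> A^2" "0 \<le> t^2" using assms Bp by auto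
  have e7: "d \<le> L*d" using assms by simp
  have "br L A B t = 1 - 3*A^2 + 3*(A*t) - t^2 + 2*(L*(A*B)) - L*B^2 - 2*(L*(B*t)) + L*(A*t) - L*t^2"
    unfolding br_def by (simp add: algebra_simps)
  also have "\<dots> < 0" using e1 e4 e5 e6 e7 e2 assms by linarith
  finally show ?thesis .
qed

lemma bracketR:
  fixes L A B t d :: real
  assumes "L > 1" "d > 0" "100*L*d \<le> 1"
    "\<bar>A - 1\<bar> \<le> 2*d" "0 \<le> B" "B \<le> 2*d" "0 \<le> t" "t \<le> 2*d"
  shows "br L A B t < 0"
proof -
  have d1: "d \<le> 1/100" by (rule d_small(1)[OF assms(1,2,3)])
  have Ap: "0 \<le> A" "A \<le> 2" "1 - 2*d \<le> A" using assms d1 by auto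
  have "(1-2*d)^2 \<le> A^2" using Ap d1 by (intro power_mono) auto
  moreover have "(1-2*d)^2 = 1 - 4*d + 4*d^2" by (simp add: power2_eq_square algebra_simps)
  ultimately have e1: "1 - 4*d \<le> A^2" using zero_le_power2[of d] by linarith
  have e2: "A*t \<le> 2*(2*d)" using pm[of A 2 t "2*d"] assms Ap by auto
  have e3: "A*B \<le> 2*(2*d)" using pm[of A 2 B "2*d"] assms Ap by auto
  have e4: "L*(A*B) \<le> L*(2*(2*d))" using e3 assms by (intro mult_left_mono) auto
  have e5: "L*(A*t) \<le> L*(2*(2*d))" using e2 assms by (intro mult_left_mono) auto
  have e6: "0 \<le> L*(B*t)" "0 \<le> L*t^2" "0 \<le> L*B^2" "0 \<le> t^2" using assms by auto
  have "br L A B t = 1 - 3*A^2 + 3*(A*t) - t^2 + 2*(L*(A*B)) - L*B^2 - 2*(L*(B*t)) + L*(A*t) - L*t^2"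
    unfolding br_def by (simp add: algebra_simps)
  also have "\<dots> < 0" using e1 e4 e5 e6 e2 assms d1 by linarith
  finally show ?thesis .
qed

definition f1 :: "real \<Rightarrow> real \<Rightarrow> real \<Rightarrow> real" where
  "f1 L a b = a^3 - a + L*b^2*a"

lemma f1_shift: "f1 L (a-t) (b+t) = f1 L a b + t * br L a b t"
  unfolding f1_def br_def by (simp add: power2_eq_square power3_eq_cube algebra_simps)

lemma f1_mono2: assumes "L \<ge> 0" "0 \<le> p" "0 \<le> q" "q \<le> q'" shows "f1 L p q \<le> f1 L p q'"
proof -
  have "q^2 \<le> q'^2" using assms by (intro power_mono) auto
  hence "L*q^2*p \<le> L*q'^2*p" using assms by (intro mult_right_mono mult_left_mono) auto
  thus ?thesis unfolding f1_def by simp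
qed

lemma tailL1:
  fixes L d a b p q :: real
  assumes "L > 1" "d > 0" "100*L*d \<le> 1" "100*L*d \<le> L - 1"
    "0 < a" "a \<le> d" "\<bar>b - 1\<bar> \<le> d" "0 < p" "0 < q" "p < a" "q \<le> b + a - p"
  shows "f1 L p q < f1 L a b"
proof -
  define t where "t = a - p"
  have "f1 L p q \<le> f1 L p (b+t)" using assms by (intro f1_mono2) (auto simp: t_def)
  also have "\<dots> = f1 L a b + t * br L a b t" using f1_shift[of L a t b] by (simp add: t_def)
  also have "\<dots> < f1 L a b"
  proof -
    have "br L a b t < 0" using assms by (intro bracketL[of L d]) (auto simp: t_def)
    moreover have "t > 0" using assms by (simp add: t_def)
    ultimately show ?thesis by (simp add: mult_pos_neg)
  qed
  finally show ?thesis .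
qed

lemma tailR1:
  fixes L d a b p q :: real
  assumes "L > 1" "d > 0" "100*L*d \<le> 1"
    "\<bar>a - 1\<bar> \<le> d" "0 < b" "b \<le> d" "\<bar>p - 1\<bar> \<le> d" "0 < q" "p < a" "q \<le> b + a - p"
  shows "f1 L p q < f1 L a b"
proof -
  define t where "t = a - p"
  have d1: "d \<le> 1/100" by (rule d_small(1)[OF assms(1,2,3)])
  have "f1 L p q \<le> f1 L p (b+t)" using assms d1 by (intro f1_mono2) (auto simp: t_def)
  also have "\<dots> = f1 L a b + t * br L a b t" using f1_shift[of L a t b] by (simp add: t_def)
  also have "\<dots> < f1 L a b"
  proof -
    have "br L a b t < 0" using assms by (intro bracketR[of L d]) (auto simp: t_def)
    moreover have "t > 0" using assms by (simp add: t_def)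
    ultimately show ?thesis by (simp add: mult_pos_neg)
  qed
  finally show ?thesis .
qed

lemma tailL2:
  fixes L d a b p q :: real
  assumes "L > 1" "d > 0" "100*L*d \<le> 1" "100*L*d \<le> L - 1"
    "0 < a" "a \<le> d" "\<bar>b - 1\<bar> \<le> d" "0 < p" "b < q" "q < 1" "a - (q - b) \<le> p"
  shows "f1 L b a < f1 L q p"
proof -
  define s where "s = q - b"
  have s: "0 < s" "s \<le> d" using assms by (auto simp: s_def)
  have d1: "d \<le> 1/100" by (rule d_small(1)[OF assms(1,2,3)])
  show ?thesis
  proof (cases "a \<le> s")
    case True
    have "f1 L q 0 \<le> f1 L q p" using assms d1 by (intro f1_mono2) auto
    have id: "f1 L q 0 = f1 L b 0 + s*(3*b^2 + 3*b* s + s^2 - 1)"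
      unfolding f1_def s_def by (simp add: power2_eq_square power3_eq_cube algebra_simps)
    have "(1-d)^2 \<le> b^2" using assms d1 by (intro power_mono) auto
    moreover have "(1-d)^2 = 1 - 2*d + d^2" by (simp add: power2_eq_square algebra_simps)
    ultimately have b2: "1 - 2*d \<le> b^2" using zero_le_power2[of d] by linarith
    have "0 \<le> b" using assms d1 by auto
    hence "0 \<le> b* s" using s by simp
    hence "2 - 6*d \<le> 3*b^2 + 3*b* s + s^2 - 1" using b2 zero_le_power2[of s] by linarith
    hence "s*(2 - 6*d) \<le> s*(3*b^2 + 3*b* s + s^2 - 1)" using s by (intro mult_left_mono) auto
    hence i1: "2* s - 6*(s*d) \<le> s*(3*b^2 + 3*b* s + s^2 - 1)" by (simp add: algebra_simps)
    have "s*d \<le> s*(1/100)" using s d1 by (intro mult_left_mono) auto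
    hence i2: "s*d \<le> s/100" by simp
    have "a^2 \<le> s*d" unfolding power2_eq_square using pm[of a s a d] assms True by auto
    moreover have "b \<le> 2" using assms d1 by auto
    ultimately have "a^2*b \<le> (s*d)*2" using assms d1 by (intro pm) auto
    hence "L*(a^2*b) \<le> L*((s*d)*2)" using assms by (intro mult_left_mono) auto
    hence i3: "L*(a^2*b) \<le> 2* s*(L*d)" by (simp add: algebra_simps)
    have "s*(L*d) \<le> s*(1/100)" using s assms by (intro mult_left_mono) auto
    hence i4: "s*(L*d) \<le> s/100" by simp
    have "f1 L b a = f1 L b 0 + L*(a^2*b)" unfolding f1_def by (simp add: algebra_simps)
    also have "\<dots> < f1 L q 0" using id i1 i2 i3 i4 s by linarith
    also have "\<dots> \<le> f1 L q p" by fact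
    finally show ?thesis .
  next
    case False
    have "f1 L b a = f1 L ((b+s) - s) ((a-s)+s)" by simp
    also have "\<dots> = f1 L (b+s) (a-s) + s * br L (b+s) (a-s) s" by (rule f1_shift)
    also have "\<dots> < f1 L (b+s) (a-s)"
    proof -
      have "br L (b+s) (a-s) s < 0" using assms s False by (intro bracketR[of L d]) (auto simp: s_def)
      thus ?thesis using s by (simp add: mult_pos_neg)
    qed
    also have "b + s = q" by (simp add: s_def)
    also have "f1 L q (a-s) \<le> f1 L q p" using assms False d1 by (intro f1_mono2) (auto simp: s_def)
    finally show ?thesis .
  qed
qed



lemma attains_max:
  fixes f :: "real \<Rightarrow> real"
  assumes "continuous_on UNIV f" "(f \<longlongrightarrow> l1) at_bot" "(f \<longlongrightarrow> l2) at_top" "l1 < f z1" "l2 < f z1"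
  shows "\<exists>z0. \<forall>z. f z \<le> f z0"
proof -
  have "eventually (\<lambda>z. f z < f z1) at_bot" using order_tendstoD(2)[OF assms(2) assms(4)] .
  then obtain M1 where M1: "\<And>z. z \<le> M1 \<Longrightarrow> f z < f z1" by (auto simp: eventually_at_bot_linorder)
  have "eventually (\<lambda>z. f z < f z1) at_top" using order_tendstoD(2)[OF assms(3) assms(5)] .
  then obtain M2 where M2: "\<And>z. z \<ge> M2 \<Longrightarrow> f z < f z1" by (auto simp: eventually_at_top_linorder)
  define S where "S = {min M1 z1 .. max M2 z1}"
  have "z1 \<in> S" by (simp add: S_def)
  have "\<exists>x\<in>S. \<forall>y\<in>S. f y \<le> f x"
    using \<open>z1 \<in> S\<close> by (intro continuous_attains_sup) (auto simp: S_def intro: continuous_on_subset[OF assms(1)])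
  then obtain z0 where z0: "z0 \<in> S" "\<And>y. y \<in> S \<Longrightarrow> f y \<le> f z0" by blast
  have "f z \<le> f z0" for z
  proof (cases "z \<in> S")
    case True thus ?thesis using z0 by blast
  next
    case False
    hence "z \<le> M1 \<or> z \<ge> M2" by (auto simp: S_def)
    hence "f z < f z1" using M1 M2 by blast
    thus ?thesis using z0(2)[OF \<open>z1 \<in> S\<close>] by simp
  qed
  thus ?thesis by blast
qed

lemma min_2nd:
  fixes w w' :: "real \<Rightarrow> real"
  assumes "\<And>z. (w has_real_derivative w' z) (at z)" "(w' has_real_derivative D) (at z0)" "\<And>z. w z0 \<le> w z"
  shows "D \<ge> 0"
proof (rule ccontr)
  assume "\<not> D \<ge> 0" hence D: "D < 0" by simp
  have w0: "w' z0 = 0" using DERIV_local_min[OF assms(1)[of z0], of 1] assms(3) by auto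
  obtain d where d: "d > 0" "\<And>h. h > 0 \<Longrightarrow> h < d \<Longrightarrow> w' z0 > w' (z0 + h)"
    using DERIV_neg_dec_right[OF assms(2) D] by blast
  have "z0 < z0 + d/2" using d by simp
  then obtain \<xi> where xi: "z0 < \<xi>" "\<xi> < z0 + d/2" "w (z0 + d/2) - w z0 = (z0 + d/2 - z0) * w' \<xi>"
    using MVT2[of z0 "z0 + d/2" w w'] assms(1) by blast
  have "w' \<xi> < 0" using d(2)[of "\<xi> - z0"] xi d w0 by simp
  hence "(z0 + d/2 - z0) * w' \<xi> < 0" using d by (simp add: mult_pos_neg)
  hence "w (z0 + d/2) - w z0 < 0" using xi(3) by simp
  thus False using assms(3)[of "z0 + d/2"] by simp
qed

lemma max_2nd:
  fixes w w' :: "real \<Rightarrow> real"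
  assumes "\<And>z. (w has_real_derivative w' z) (at z)" "(w' has_real_derivative D) (at z0)" "\<And>z. w z \<le> w z0"
  shows "D \<le> 0"
proof -
  have "- D \<ge> 0"
    by (rule min_2nd[of "\<lambda>z. - w z" "\<lambda>z. - w' z" "-D" z0]) (auto intro: derivative_intros assms simp: assms(3))
  thus ?thesis by simp
qed

definition adm :: "real \<Rightarrow> (real \<Rightarrow> real) \<Rightarrow> (real \<Rightarrow> real) \<Rightarrow> bool" where
  "adm L v1 v2 \<longleftrightarrow> is_system_solution L v1 v2 \<and>
     (v1 \<longlongrightarrow> 0) at_bot \<and> (v2 \<longlongrightarrow> 1) at_bot \<and>
     (v1 \<longlongrightarrow> 1) at_top \<and> (v2 \<longlongrightarrow> 0) at_top \<and>
     (\<forall>z. v1 z > 0 \<and> v2 z > 0)"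

lemma sol_obtain:
  assumes "is_system_solution L v1 v2"
  obtains d1 d2 where "\<And>z. (v1 has_real_derivative d1 z) (at z)"
    "\<And>z. (d1 has_real_derivative f1 L (v1 z) (v2 z)) (at z)"
    "\<And>z. (v2 has_real_derivative d2 z) (at z)"
    "\<And>z. (d2 has_real_derivative f1 L (v2 z) (v1 z)) (at z)"
proof -
  obtain d1 dd1 d2 dd2 where H: "\<forall>z. (v1 has_real_derivative d1 z) (at z) \<and> (d1 has_real_derivative dd1 z) (at z) \<and>
            (v2 has_real_derivative d2 z) (at z) \<and> (d2 has_real_derivative dd2 z) (at z) \<and>
            - dd1 z + (v1 z)^3 - v1 z + L * (v2 z)^2 * v1 z = 0 \<and>
            - dd2 z + (v2 z)^3 - v2 z + L * (v1 z)^2 * v2 z = 0"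
    using assms unfolding is_system_solution_def by blast
  have "dd1 z = f1 L (v1 z) (v2 z)" "dd2 z = f1 L (v2 z) (v1 z)" for z
    using H[rule_format, of z] unfolding f1_def by linarith+
  thus ?thesis using that H by metis
qed

lemma sol_intro:
  assumes "\<And>z. (v1 has_real_derivative d1 z) (at z)"
    "\<And>z. (d1 has_real_derivative f1 L (v1 z) (v2 z)) (at z)"
    "\<And>z. (v2 has_real_derivative d2 z) (at z)"
    "\<And>z. (d2 has_real_derivative f1 L (v2 z) (v1 z)) (at z)"
  shows "is_system_solution L v1 v2"
  unfolding is_system_solution_def
  by (rule exI[of _ d1], rule exI[of _ "\<lambda>z. f1 L (v1 z) (v2 z)"], rule exI[of _ d2],
      rule exI[of _ "\<lambda>z. f1 L (v2 z) (v1 z)"]) (use assms[unfolded f1_def] in \<open>simp add: f1_def\<close>)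

lemma sol_shift:
  assumes "is_system_solution L v1 v2"
  shows "is_system_solution L (\<lambda>z. v1 (z + c)) (\<lambda>z. v2 (z + c))"
proof -
  obtain d1 d2 where D: "\<And>z. (v1 has_real_derivative d1 z) (at z)"
    "\<And>z. (d1 has_real_derivative f1 L (v1 z) (v2 z)) (at z)"
    "\<And>z. (v2 has_real_derivative d2 z) (at z)"
    "\<And>z. (d2 has_real_derivative f1 L (v2 z) (v1 z)) (at z)"
    using sol_obtain[OF assms] by blast
  show ?thesis
    by (rule sol_intro[of _ "\<lambda>z. d1 (z + c)" _ _ "\<lambda>z. d2 (z + c)"])
       (simp_all add: DERIV_shift[symmetric] D)
qed

lemma filterlim_shift_top: "filterlim (\<lambda>z::real. z + c) at_top at_top"
  unfolding filterlim_at_top eventually_at_top_linorder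
  by (metis diff_add_cancel add_le_cancel_right)

lemma filterlim_shift_bot: "filterlim (\<lambda>z::real. z + c) at_bot at_bot"
  unfolding filterlim_at_bot eventually_at_bot_linorder
  by (metis diff_add_cancel add_le_cancel_right)

lemma adm_shift:
  assumes "adm L v1 v2"
  shows "adm L (\<lambda>z. v1 (z + c)) (\<lambda>z. v2 (z + c))"
  using assms unfolding adm_def
  by (auto intro: sol_shift filterlim_compose[OF _ filterlim_shift_top] filterlim_compose[OF _ filterlim_shift_bot])

lemma admissible_adm: "admissible L v1 v2 \<Longrightarrow> adm L v1 v2"
  unfolding admissible_def adm_def by blast

lemma below1:
  fixes x y dx :: "real \<Rightarrow> real"
  assumes "\<And>z. (x has_real_derivative dx z) (at z)" "\<And>z. (dx has_real_derivative f1 L (x z) (y z)) (at z)"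
    "\<And>z. y z > 0" "\<And>z. x z > 0" "L > 0"
    "(x \<longlongrightarrow> l1) at_bot" "(x \<longlongrightarrow> l2) at_top" "l1 \<le> 1" "l2 \<le> 1"
  shows "x z < 1"
proof (rule ccontr)
  assume nz: "\<not> x z < 1"
  have cont: "continuous_on UNIV x"
    using assms(1) by (meson DERIV_isCont continuous_at_imp_continuous_on)
  obtain z0 where z0: "\<And>t. x t \<le> x z0" "x z0 \<ge> 1"
  proof (cases "\<exists>t. x t > 1")
    case True
    then obtain t where t: "x t > 1" by blast
    obtain z0 where "\<forall>s. x s \<le> x z0" using attains_max[OF cont assms(6,7), of t] t assms(8,9) by auto
    hence "\<And>s. x s \<le> x z0" by blast
    moreover have "1 \<le> x z0" using \<open>\<forall>s. x s \<le> x z0\<close> t by (meson less_le_trans less_imp_le)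
    ultimately show ?thesis by (rule that)
  next
    case False
    hence "\<And>t. x t \<le> x z" using nz by (meson not_less order_trans)
    moreover have "1 \<le> x z" using nz by simp
    ultimately show ?thesis by (rule that)
  qed
  have "f1 L (x z0) (y z0) \<le> 0" by (rule max_2nd[OF assms(1) assms(2) z0(1)])
  moreover have "f1 L (x z0) (y z0) > 0"
  proof -
    have "1 \<le> x z0 ^ 2" using z0(2) by (simp add: one_le_power)
    hence "0 \<le> x z0 * (x z0 ^ 2 - 1)" using z0(2) by simp
    moreover have "0 < L * (y z0)^2 * x z0" using assms(3)[of z0] assms(4)[of z0] assms(5) by simp
    ultimately show ?thesis unfolding f1_def by (simp add: power3_eq_cube power2_eq_square algebra_simps)
  qed
  ultimately show False by simp
qed

lemma adm_bounds:
  assumes "adm L v1 v2" "L > 0"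
  shows "0 < v1 z" "v1 z < 1" "0 < v2 z" "v2 z < 1"
proof -
  have S: "is_system_solution L v1 v2" and lim: "(v1 \<longlongrightarrow> 0) at_bot" "(v2 \<longlongrightarrow> 1) at_bot"
     "(v1 \<longlongrightarrow> 1) at_top" "(v2 \<longlongrightarrow> 0) at_top" and pos: "\<And>z. v1 z > 0" "\<And>z. v2 z > 0"
    using assms unfolding adm_def by auto
  obtain d1 d2 where D: "\<And>z. (v1 has_real_derivative d1 z) (at z)"
    "\<And>z. (d1 has_real_derivative f1 L (v1 z) (v2 z)) (at z)"
    "\<And>z. (v2 has_real_derivative d2 z) (at z)"
    "\<And>z. (d2 has_real_derivative f1 L (v2 z) (v1 z)) (at z)"
    using sol_obtain[OF S] by blast
  show "0 < v1 z" "0 < v2 z" using pos by auto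
  show "v1 z < 1" by (rule below1[OF D(1,2) pos(2) pos(1) assms(2) lim(1) lim(3)]) auto
  show "v2 z < 1" by (rule below1[OF D(3,4) pos(1) pos(2) assms(2) lim(2) lim(4)]) auto
qed

lemma deriv_cont: "(\<And>z. (v has_real_derivative dv z) (at z)) \<Longrightarrow> continuous_on UNIV v"
  by (meson DERIV_isCont continuous_at_imp_continuous_on)

lemma comparison:
  fixes L d A B :: real and u1 u2 y1 y2 :: "real \<Rightarrow> real"
  assumes L: "L > 1" and d: "d > 0" "100*L*d \<le> 1" "100*L*d \<le> L - 1"
    and U: "adm L u1 u2" and Y: "adm L y1 y2"
    and mid: "\<And>z. A \<le> z \<Longrightarrow> z \<le> B \<Longrightarrow> u1 z < y1 z \<and> y2 z < u2 z"
    and left: "\<And>z. z < A \<Longrightarrow> \<bar>u1 z\<bar> \<le> d \<and> \<bar>u2 z - 1\<bar> \<le> d"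
    and right: "\<And>z. z > B \<Longrightarrow> \<bar>u1 z - 1\<bar> \<le> d \<and> \<bar>u2 z\<bar> \<le> d \<and> \<bar>y1 z - 1\<bar> \<le> d \<and> \<bar>y2 z\<bar> \<le> d"
  shows "u1 z \<le> y1 z \<and> y2 z \<le> u2 z"
proof (rule ccontr)
  assume nz: "\<not> (u1 z \<le> y1 z \<and> y2 z \<le> u2 z)"
  have L0: "L > 0" using L by simp
  obtain du1 du2 where DU: "\<And>z. (u1 has_real_derivative du1 z) (at z)"
    "\<And>z. (du1 has_real_derivative f1 L (u1 z) (u2 z)) (at z)"
    "\<And>z. (u2 has_real_derivative du2 z) (at z)"
    "\<And>z. (du2 has_real_derivative f1 L (u2 z) (u1 z)) (at z)"
    using sol_obtain U unfolding adm_def by metis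
  obtain dy1 dy2 where DY: "\<And>z. (y1 has_real_derivative dy1 z) (at z)"
    "\<And>z. (dy1 has_real_derivative f1 L (y1 z) (y2 z)) (at z)"
    "\<And>z. (y2 has_real_derivative dy2 z) (at z)"
    "\<And>z. (dy2 has_real_derivative f1 L (y2 z) (y1 z)) (at z)"
    using sol_obtain Y unfolding adm_def by metis
  have limU: "(u1 \<longlongrightarrow> 0) at_bot" "(u2 \<longlongrightarrow> 1) at_bot" "(u1 \<longlongrightarrow> 1) at_top" "(u2 \<longlongrightarrow> 0) at_top"
    using U unfolding adm_def by auto
  have limY: "(y1 \<longlongrightarrow> 0) at_bot" "(y2 \<longlongrightarrow> 1) at_bot" "(y1 \<longlongrightarrow> 1) at_top" "(y2 \<longlongrightarrow> 0) at_top"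
    using Y unfolding adm_def by auto
  note bU = adm_bounds[OF U L0] and bY = adm_bounds[OF Y L0]
  define m where "m z = min (y1 z - u1 z) (u2 z - y2 z)" for z
  have cm: "continuous_on UNIV (\<lambda>z. - m z)" unfolding m_def
    using deriv_cont[OF DU(1)] deriv_cont[OF DU(3)] deriv_cont[OF DY(1)] deriv_cont[OF DY(3)]
    by (intro continuous_intros) auto
  have "((\<lambda>z. - m z) \<longlongrightarrow> - min (0 - 0) (1 - 1)) at_bot" unfolding m_def
    using limU limY by (intro tendsto_intros) auto
  hence l1: "((\<lambda>z. - m z) \<longlongrightarrow> 0) at_bot" by simp
  have "((\<lambda>z. - m z) \<longlongrightarrow> - min (1 - 1) (0 - 0)) at_top" unfolding m_def
    using limU limY by (intro tendsto_intros) auto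
  hence l2: "((\<lambda>z. - m z) \<longlongrightarrow> 0) at_top" by simp
  have mz: "m z < 0" using nz unfolding m_def by auto
  obtain z0 where z0: "\<And>t. - m t \<le> - m z0" using attains_max[OF cm l1 l2, of z] mz by auto
  hence z0': "\<And>t. m z0 \<le> m t" by (meson neg_le_iff_le)
  have mz0: "m z0 < 0" using z0'[of z] mz by simp
  have out: "z0 < A \<or> z0 > B"
  proof (rule ccontr)
    assume "\<not> (z0 < A \<or> z0 > B)"
    hence "m z0 > 0" using mid[of z0] unfolding m_def by auto
    thus False using mz0 by simp
  qed
  show False
  proof (cases "y1 z0 - u1 z0 \<le> u2 z0 - y2 z0")
    case True
    have mm: "m z0 = y1 z0 - u1 z0" using True unfolding m_def by simp
    have gm: "\<And>t. y1 z0 - u1 z0 \<le> y1 t - u1 t"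
      using z0' mm unfolding m_def by (metis min.boundedE)
    have "f1 L (y1 z0) (y2 z0) - f1 L (u1 z0) (u2 z0) \<ge> 0"
      by (rule min_2nd[of "\<lambda>t. y1 t - u1 t" "\<lambda>t. dy1 t - du1 t"])
         (auto intro!: DERIV_diff DU DY gm)
    moreover have "f1 L (y1 z0) (y2 z0) < f1 L (u1 z0) (u2 z0)"
    proof (cases "z0 < A")
      case True
      show ?thesis using left[OF True] bU[of z0] bY[of z0] mz0 mm \<open>y1 z0 - u1 z0 \<le> u2 z0 - y2 z0\<close>
        by (intro tailL1[OF L d]) auto
    next
      case False
      hence "z0 > B" using out by simp
      show ?thesis using right[OF \<open>z0 > B\<close>] bU[of z0] bY[of z0] mz0 mm \<open>y1 z0 - u1 z0 \<le> u2 z0 - y2 z0\<close>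
        by (intro tailR1[OF L d(1,2)]) auto
    qed
    ultimately show False by simp
  next
    case False
    have mm: "m z0 = u2 z0 - y2 z0" using False unfolding m_def by simp
    have gm: "\<And>t. u2 z0 - y2 z0 \<le> u2 t - y2 t"
      using z0' mm unfolding m_def by (metis min.boundedE)
    have "f1 L (u2 z0) (u1 z0) - f1 L (y2 z0) (y1 z0) \<ge> 0"
      by (rule min_2nd[of "\<lambda>t. u2 t - y2 t" "\<lambda>t. du2 t - dy2 t"])
         (auto intro!: DERIV_diff DU DY gm)
    moreover have "f1 L (u2 z0) (u1 z0) < f1 L (y2 z0) (y1 z0)"
    proof (cases "z0 < A")
      case True
      show ?thesis using left[OF True] bU[of z0] bY[of z0] mz0 mm False
        by (intro tailL2[OF L d]) auto
    next
      case False
      hence "z0 > B" using out by simp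
      show ?thesis using right[OF \<open>z0 > B\<close>] bU[of z0] bY[of z0] mz0 mm \<open>\<not> (y1 z0 - u1 z0 \<le> u2 z0 - y2 z0)\<close>
        by (intro tailL1[OF L d]) auto
    qed
    ultimately show False by simp
  qed
qed



lemma f1_lip:
  fixes L p q a b :: real
  assumes "L \<ge> 0" "0 \<le> p" "p \<le> 1" "0 \<le> q" "q \<le> 1" "0 \<le> a" "a \<le> 1" "0 \<le> b" "b \<le> 1"
  shows "\<bar>f1 L p q - f1 L a b\<bar> \<le> (4 + 2*L) * (\<bar>p - a\<bar> + \<bar>q - b\<bar>)"
proof -
  have id: "f1 L p q - f1 L a b = (p-a)*(p^2+p*a+a^2 - 1 + L*q^2) + (L*a*(q+b))*(q-b)"
    unfolding f1_def by (simp add: power2_eq_square power3_eq_cube algebra_simps)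
  have h1: "p^2 \<le> 1" "p*a \<le> 1" "a^2 \<le> 1" "q^2 \<le> 1"
    using assms by (auto simp: power2_eq_square mult_le_one)
  have h2: "0 \<le> p^2" "0 \<le> p*a" "0 \<le> a^2" "0 \<le> q^2" using assms by auto
  have h3: "L*q^2 \<le> L" "0 \<le> L*q^2" using h1(4) assms by (auto simp: mult_left_le)
  have c1: "\<bar>p^2+p*a+a^2 - 1 + L*q^2\<bar> \<le> 4 + 2*L" unfolding abs_le_iff using h1 h2 h3 assms(1) by linarith
  have "a*(q+b) \<le> 1*2" using assms by (intro mult_mono) auto
  hence "L*(a*(q+b)) \<le> L*2" using assms by (intro mult_left_mono) auto
  moreover have "0 \<le> L*(a*(q+b))" using assms by auto
  ultimately have c2: "\<bar>L*a*(q+b)\<bar> \<le> 4 + 2*L" by (simp add: mult.assoc)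
  have "\<bar>f1 L p q - f1 L a b\<bar> \<le> \<bar>(p-a)*(p^2+p*a+a^2 - 1 + L*q^2)\<bar> + \<bar>(L*a*(q+b))*(q-b)\<bar>"
    unfolding id by (rule abs_triangle_ineq)
  also have "\<dots> = \<bar>p-a\<bar>*\<bar>p^2+p*a+a^2 - 1 + L*q^2\<bar> + \<bar>L*a*(q+b)\<bar>*\<bar>q-b\<bar>" by (simp add: abs_mult)
  also have "\<dots> \<le> \<bar>p-a\<bar>*(4 + 2*L) + (4+2*L)*\<bar>q-b\<bar>"
    using c1 c2 by (intro add_mono mult_left_mono mult_right_mono) auto
  finally show ?thesis by (simp add: algebra_simps)
qed

lemma two_ab: fixes x y :: real shows "2*(\<bar>x\<bar>*\<bar>y\<bar>) \<le> x^2 + y^2"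
proof -
  have "0 \<le> (\<bar>x\<bar> - \<bar>y\<bar>)^2" by simp
  thus ?thesis by (simp add: power2_eq_square algebra_simps)
qed

lemma energy_bound:
  fixes a a' b b' P Q K :: real
  assumes "K \<ge> 0" "\<bar>P\<bar> \<le> K*(\<bar>a\<bar>+\<bar>b\<bar>)" "\<bar>Q\<bar> \<le> K*(\<bar>a\<bar>+\<bar>b\<bar>)"
  shows "\<bar>2*a*a' + 2*a'*P + 2*b*b' + 2*b'*Q\<bar> \<le> (1+2*K)*(a^2+a'^2+b^2+b'^2)"
proof -
  have t: "\<bar>2*a*a' + 2*a'*P + 2*b*b' + 2*b'*Q\<bar> \<le> 2*(\<bar>a\<bar>*\<bar>a'\<bar>) + 2*(\<bar>a'\<bar>*\<bar>P\<bar>) + 2*(\<bar>b\<bar>*\<bar>b'\<bar>) + 2*(\<bar>b'\<bar>*\<bar>Q\<bar>)"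
  proof -
    have "\<bar>2*a*a' + 2*a'*P + 2*b*b' + 2*b'*Q\<bar> \<le> \<bar>2*a*a'\<bar> + \<bar>2*a'*P\<bar> + \<bar>2*b*b'\<bar> + \<bar>2*b'*Q\<bar>"
      using abs_triangle_ineq[of "2*a*a' + 2*a'*P + 2*b*b'" "2*b'*Q"] abs_triangle_ineq[of "2*a*a' + 2*a'*P" "2*b*b'"]
        abs_triangle_ineq[of "2*a*a'" "2*a'*P"] by linarith
    moreover have "\<bar>2*a*a'\<bar> = 2*(\<bar>a\<bar>*\<bar>a'\<bar>)" "\<bar>2*a'*P\<bar> = 2*(\<bar>a'\<bar>*\<bar>P\<bar>)"
      "\<bar>2*b*b'\<bar> = 2*(\<bar>b\<bar>*\<bar>b'\<bar>)" "\<bar>2*b'*Q\<bar> = 2*(\<bar>b'\<bar>*\<bar>Q\<bar>)" by (simp_all add: abs_mult)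
    ultimately show ?thesis by linarith
  qed
  have p1: "\<bar>a'\<bar>*\<bar>P\<bar> \<le> \<bar>a'\<bar>*(K*(\<bar>a\<bar>+\<bar>b\<bar>))" using assms by (intro mult_left_mono) auto
  have p2: "\<bar>b'\<bar>*\<bar>Q\<bar> \<le> \<bar>b'\<bar>*(K*(\<bar>a\<bar>+\<bar>b\<bar>))" using assms by (intro mult_left_mono) auto
  have "2*(\<bar>a'\<bar>*\<bar>a\<bar>) + 2*(\<bar>a'\<bar>*\<bar>b\<bar>) + 2*(\<bar>b'\<bar>*\<bar>a\<bar>) + 2*(\<bar>b'\<bar>*\<bar>b\<bar>) \<le> 2*(a^2+a'^2+b^2+b'^2)"
    using two_ab[of a' a] two_ab[of a' b] two_ab[of b' a] two_ab[of b' b] by (simp add: algebra_simps)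
  hence "K*(2*(\<bar>a'\<bar>*\<bar>a\<bar>) + 2*(\<bar>a'\<bar>*\<bar>b\<bar>) + 2*(\<bar>b'\<bar>*\<bar>a\<bar>) + 2*(\<bar>b'\<bar>*\<bar>b\<bar>)) \<le> K*(2*(a^2+a'^2+b^2+b'^2))"
    using assms by (intro mult_left_mono) auto
  hence p3: "2*(\<bar>a'\<bar>*(K*(\<bar>a\<bar>+\<bar>b\<bar>))) + 2*(\<bar>b'\<bar>*(K*(\<bar>a\<bar>+\<bar>b\<bar>))) \<le> 2*K*(a^2+a'^2+b^2+b'^2)"
    by (simp add: algebra_simps)
  have p4: "2*(\<bar>a\<bar>*\<bar>a'\<bar>) + 2*(\<bar>b\<bar>*\<bar>b'\<bar>) \<le> a^2+a'^2+b^2+b'^2"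
    using two_ab[of a a'] two_ab[of b b'] by linarith
  have "(1+2*K)*(a^2+a'^2+b^2+b'^2) = (a^2+a'^2+b^2+b'^2) + 2*K*(a^2+a'^2+b^2+b'^2)"
    by (simp add: algebra_simps)
  thus ?thesis using t p1 p2 p3 p4 by linarith
qed

lemma gronwall0:
  fixes e e' :: "real \<Rightarrow> real"
  assumes "\<And>z. (e has_real_derivative e' z) (at z)" "\<And>z. \<bar>e' z\<bar> \<le> C * e z" "\<And>z. e z \<ge> 0" "e z0 = 0"
  shows "e z = 0"
proof (cases "z0 \<le> z")
  case True
  have "e z * exp (- C * z) \<le> e z0 * exp (- C * z0)"
  proof (rule DERIV_nonpos_imp_nonincreasing[OF True, of "\<lambda>t. e t * exp (- C * t)"])
    fix x
    have "((\<lambda>t. e t * exp (- C * t)) has_real_derivative e' x * exp (- C * x) + e x * (exp (- C * x) * (- C))) (at x)"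
      by (auto intro!: derivative_eq_intros assms(1))
    moreover have "e' x * exp (- C * x) + e x * (exp (- C * x) * (- C)) = (e' x - C * e x) * exp (- C * x)"
      by (simp add: algebra_simps)
    moreover have "(e' x - C * e x) * exp (- C * x) \<le> 0"
      using assms(2)[of x] by (intro mult_nonpos_nonneg) (auto simp: abs_le_iff)
    ultimately show "\<exists>y. ((\<lambda>t. e t * exp (- C * t)) has_real_derivative y) (at x) \<and> y \<le> 0" by auto
  qed
  hence "e z * exp (- C * z) \<le> 0" using assms(4) by simp
  hence "e z \<le> 0" by (simp add: mult_le_0_iff)
  thus ?thesis using assms(3)[of z] by simp
next
  case False
  hence F: "z \<le> z0" by simp
  have "e z * exp (C * z) \<le> e z0 * exp (C * z0)"
  proof (rule DERIV_nonneg_imp_nondecreasing[OF F, of "\<lambda>t. e t * exp (C * t)"])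
    fix x
    have "((\<lambda>t. e t * exp (C * t)) has_real_derivative e' x * exp (C * x) + e x * (exp (C * x) * C)) (at x)"
      by (auto intro!: derivative_eq_intros assms(1))
    moreover have "e' x * exp (C * x) + e x * (exp (C * x) * C) = (e' x + C * e x) * exp (C * x)"
      by (simp add: algebra_simps)
    moreover have "(e' x + C * e x) * exp (C * x) \<ge> 0"
      using assms(2)[of x] by (intro mult_nonneg_nonneg) (auto simp: abs_le_iff)
    ultimately show "\<exists>y. ((\<lambda>t. e t * exp (C * t)) has_real_derivative y) (at x) \<and> y \<ge> 0" by auto
  qed
  hence "e z * exp (C * z) \<le> 0" using assms(4) by simp
  hence "e z \<le> 0" by (simp add: mult_le_0_iff)
  thus ?thesis using assms(3)[of z] by simp
qed

lemma ode_unique: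
  fixes u1 u2 y1 y2 du1 du2 dy1 dy2 :: "real \<Rightarrow> real"
  assumes L: "L \<ge> 0"
    and DU: "\<And>z. (u1 has_real_derivative du1 z) (at z)"
    "\<And>z. (du1 has_real_derivative f1 L (u1 z) (u2 z)) (at z)"
    "\<And>z. (u2 has_real_derivative du2 z) (at z)"
    "\<And>z. (du2 has_real_derivative f1 L (u2 z) (u1 z)) (at z)"
    and DY: "\<And>z. (y1 has_real_derivative dy1 z) (at z)"
    "\<And>z. (dy1 has_real_derivative f1 L (y1 z) (y2 z)) (at z)"
    "\<And>z. (y2 has_real_derivative dy2 z) (at z)"
    "\<And>z. (dy2 has_real_derivative f1 L (y2 z) (y1 z)) (at z)"
    and bd: "\<And>z. 0 \<le> u1 z \<and> u1 z \<le> 1 \<and> 0 \<le> u2 z \<and> u2 z \<le> 1 \<and> 0 \<le> y1 z \<and> y1 z \<le> 1 \<and> 0 \<le> y2 z \<and> y2 z \<le> 1"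
    and eq: "u1 z0 = y1 z0" "u2 z0 = y2 z0" "du1 z0 = dy1 z0" "du2 z0 = dy2 z0"
  shows "u1 z = y1 z \<and> u2 z = y2 z"
proof -
  define K where "K = 4 + 2*L"
  define P where "P t = f1 L (y1 t) (y2 t) - f1 L (u1 t) (u2 t)" for t
  define Q where "Q t = f1 L (y2 t) (y1 t) - f1 L (u2 t) (u1 t)" for t
  define e where "e t = (y1 t - u1 t)^2 + (dy1 t - du1 t)^2 + (y2 t - u2 t)^2 + (dy2 t - du2 t)^2" for t
  define e' where "e' t = 2*(y1 t - u1 t)*(dy1 t - du1 t) + 2*(dy1 t - du1 t)*P t
     + 2*(y2 t - u2 t)*(dy2 t - du2 t) + 2*(dy2 t - du2 t)*Q t" for t
  have de: "(e has_real_derivative e' t) (at t)" for t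
    unfolding e_def e'_def P_def Q_def
    by (auto intro!: derivative_eq_intros DU DY simp: algebra_simps power2_eq_square)
  have bnd: "\<bar>e' t\<bar> \<le> (1 + 2*K) * e t" for t
  proof -
    have "\<bar>P t\<bar> \<le> K * (\<bar>y1 t - u1 t\<bar> + \<bar>y2 t - u2 t\<bar>)"
      unfolding P_def K_def using bd[of t] L by (intro f1_lip) auto
    moreover have "\<bar>Q t\<bar> \<le> K * (\<bar>y1 t - u1 t\<bar> + \<bar>y2 t - u2 t\<bar>)"
      using f1_lip[of L "y2 t" "y1 t" "u2 t" "u1 t"] bd[of t] L unfolding Q_def K_def by (simp add: add.commute)
    ultimately show ?thesis unfolding e'_def e_def using L
      by (intro energy_bound) (auto simp: K_def)
  qed
  have "e z = 0"
    by (rule gronwall0[OF de bnd, of z0]) (auto simp: e_def eq)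
  hence "(y1 z - u1 z)^2 = 0 \<and> (y2 z - u2 z)^2 = 0"
    unfolding e_def by (smt (verit) zero_le_power2)
  thus ?thesis by simp
qed



lemma tails:
  assumes "adm L v1 v2" "e > 0"
  shows "\<exists>R\<ge>0. \<forall>z. (z \<le> -R \<longrightarrow> \<bar>v1 z\<bar> < e \<and> \<bar>v2 z - 1\<bar> < e) \<and> (z \<ge> R \<longrightarrow> \<bar>v1 z - 1\<bar> < e \<and> \<bar>v2 z\<bar> < e)"
proof -
  have lim: "(v1 \<longlongrightarrow> 0) at_bot" "(v2 \<longlongrightarrow> 1) at_bot" "(v1 \<longlongrightarrow> 1) at_top" "(v2 \<longlongrightarrow> 0) at_top"
    using assms unfolding adm_def by auto
  have "eventually (\<lambda>z. dist (v1 z) 0 < e) at_bot" "eventually (\<lambda>z. dist (v2 z) 1 < e) at_bot"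
    "eventually (\<lambda>z. dist (v1 z) 1 < e) at_top" "eventually (\<lambda>z. dist (v2 z) 0 < e) at_top"
    using lim assms(2) by (auto simp: tendsto_iff)
  hence "eventually (\<lambda>z. dist (v1 z) 0 < e \<and> dist (v2 z) 1 < e) at_bot"
    "eventually (\<lambda>z. dist (v1 z) 1 < e \<and> dist (v2 z) 0 < e) at_top"
    by (auto intro: eventually_conj)
  then obtain R1 R2 where R1: "\<And>z. z \<le> R1 \<Longrightarrow> dist (v1 z) 0 < e \<and> dist (v2 z) 1 < e"
    and R2: "\<And>z. z \<ge> R2 \<Longrightarrow> dist (v1 z) 1 < e \<and> dist (v2 z) 0 < e"
    unfolding eventually_at_bot_linorder eventually_at_top_linorder by blast
  show ?thesis
    apply (rule exI[of _ "max 0 (max (-R1) R2)"])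
    using R1 R2 by (auto simp: dist_real_def)
qed

theorem theorem1p3:
  fixes L :: real and u1 u2 v1 v2 :: "real \<Rightarrow> real"
  assumes "L > 1"
    and "admissible L u1 u2"
    and "admissible L v1 v2"
  shows "\<exists>c. \<forall>z. u1 z = v1 (z + c) \<and> u2 z = v2 (z + c)"
proof -
  have L: "L > 1" using assms(1) .
  have L0: "L > 0" using L by simp
  have U: "adm L u1 u2" and V: "adm L v1 v2" using assms(2,3) admissible_adm by auto
  define d where "d = min 1 (L-1) / (100*L)"
  have dpos: "d > 0" using L by (simp add: d_def)
  have "100*L*d = min 1 (L-1)" using L by (simp add: d_def)
  hence d1: "100*L*d \<le> 1" and d2: "100*L*d \<le> L - 1" by auto
  note bU = adm_bounds[OF U L0] and bV = adm_bounds[OF V L0]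
  obtain du1 du2 where DU: "\<And>z. (u1 has_real_derivative du1 z) (at z)"
    "\<And>z. (du1 has_real_derivative f1 L (u1 z) (u2 z)) (at z)"
    "\<And>z. (u2 has_real_derivative du2 z) (at z)"
    "\<And>z. (du2 has_real_derivative f1 L (u2 z) (u1 z)) (at z)"
    using sol_obtain U unfolding adm_def by metis
  obtain dv1 dv2 where DV: "\<And>z. (v1 has_real_derivative dv1 z) (at z)"
    "\<And>z. (dv1 has_real_derivative f1 L (v1 z) (v2 z)) (at z)"
    "\<And>z. (v2 has_real_derivative dv2 z) (at z)"
    "\<And>z. (dv2 has_real_derivative f1 L (v2 z) (v1 z)) (at z)"
    using sol_obtain V unfolding adm_def by metis
  have cu1: "continuous_on UNIV u1" and cu2: "continuous_on UNIV u2"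
    and cv1: "continuous_on UNIV v1" and cv2: "continuous_on UNIV v2"
    using deriv_cont DU(1) DU(3) DV(1) DV(3) by blast+
  define W where "W \<sigma> \<longleftrightarrow> (\<forall>z. u1 z \<le> v1 (z + \<sigma>) \<and> v2 (z + \<sigma>) \<le> u2 z)" for \<sigma>
  obtain RU where RU: "RU \<ge> 0" "\<And>z. z \<le> -RU \<Longrightarrow> \<bar>u1 z\<bar> < d \<and> \<bar>u2 z - 1\<bar> < d"
    "\<And>z. z \<ge> RU \<Longrightarrow> \<bar>u1 z - 1\<bar> < d \<and> \<bar>u2 z\<bar> < d"
    using tails[OF U dpos] by blast
  obtain \<tau>0 where tau0: "\<And>\<sigma>. \<sigma> \<ge> \<tau>0 \<Longrightarrow> W \<sigma>"
  proof -
    have "\<exists>x\<in>{-RU..RU}. \<forall>y\<in>{-RU..RU}. u1 y \<le> u1 x"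
      using RU(1) by (intro continuous_attains_sup) (auto intro: continuous_on_subset[OF cu1])
    then obtain s1 where s1: "\<And>y. y \<in> {-RU..RU} \<Longrightarrow> u1 y \<le> u1 s1" by blast
    have "\<exists>x\<in>{-RU..RU}. \<forall>y\<in>{-RU..RU}. u2 x \<le> u2 y"
      using RU(1) by (intro continuous_attains_inf) (auto intro: continuous_on_subset[OF cu2])
    then obtain s2 where s2: "\<And>y. y \<in> {-RU..RU} \<Longrightarrow> u2 s2 \<le> u2 y" by blast
    define \<epsilon> where "\<epsilon> = min d (min (1 - u1 s1) (u2 s2))"
    have epos: "\<epsilon> > 0" using dpos bU(2)[of s1] bU(3)[of s2] by (simp add: \<epsilon>_def)
    obtain RV where RV: "RV \<ge> 0" "\<And>z. z \<ge> RV \<Longrightarrow> \<bar>v1 z - 1\<bar> < \<epsilon> \<and> \<bar>v2 z\<bar> < \<epsilon>"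
      using tails[OF V epos] by blast
    show ?thesis
    proof (rule that[of "RU + RV"])
      fix \<sigma> assume \<sigma>: "\<sigma> \<ge> RU + RV"
      show "W \<sigma>" unfolding W_def
      proof
        fix z
        show "u1 z \<le> v1 (z + \<sigma>) \<and> v2 (z + \<sigma>) \<le> u2 z"
        proof (rule comparison[OF L dpos d1 d2 U adm_shift[OF V, of \<sigma>], of "-RU" RU])
          fix t assume t: "-RU \<le> t" "t \<le> RU"
          have "t + \<sigma> \<ge> RV" using t \<sigma> by simp
          hence "\<bar>v1 (t + \<sigma>) - 1\<bar> < \<epsilon> \<and> \<bar>v2 (t + \<sigma>)\<bar> < \<epsilon>" using RV by blast
          moreover have "u1 t \<le> u1 s1" "u2 s2 \<le> u2 t" using s1 s2 t by auto
          ultimately show "u1 t < v1 (t + \<sigma>) \<and> v2 (t + \<sigma>) < u2 t" unfolding \<epsilon>_def by auto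
        next
          fix t assume "t < -RU" thus "\<bar>u1 t\<bar> \<le> d \<and> \<bar>u2 t - 1\<bar> \<le> d" using RU(2)[of t] by auto
        next
          fix t assume t: "t > RU"
          have "t + \<sigma> \<ge> RV" using t \<sigma> RU(1) by simp
          hence "\<bar>v1 (t + \<sigma>) - 1\<bar> < \<epsilon> \<and> \<bar>v2 (t + \<sigma>)\<bar> < \<epsilon>" using RV by blast
          moreover have "\<epsilon> \<le> d" by (simp add: \<epsilon>_def)
          ultimately show "\<bar>u1 t - 1\<bar> \<le> d \<and> \<bar>u2 t\<bar> \<le> d \<and> \<bar>v1 (t + \<sigma>) - 1\<bar> \<le> d \<and> \<bar>v2 (t + \<sigma>)\<bar> \<le> d"
            using RU(3)[of t] t by auto
        qed
      qed
    qed
  qed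
  obtain \<tau>l where taul: "\<not> W \<tau>l"
  proof -
    have "(v1 \<longlongrightarrow> 0) at_bot" using V unfolding adm_def by auto
    hence "eventually (\<lambda>s. v1 s < u1 0) at_bot" using bU(1)[of 0] by (rule order_tendstoD(2))
    then obtain s where "v1 s < u1 0" by (meson eventually_happens' trivial_limit_at_bot_linorder)
    hence "\<not> W s" unfolding W_def by (metis add_0 not_le)
    thus ?thesis by (rule that)
  qed
  define S where "S = {\<tau>. \<forall>\<sigma>\<ge>\<tau>. W \<sigma>}"
  have Sne: "S \<noteq> {}" using tau0 by (auto simp: S_def)
  have Slow: "\<tau>l < \<tau>" if "\<tau> \<in> S" for \<tau>
  proof (rule ccontr)
    assume "\<not> \<tau>l < \<tau>"
    hence "W \<tau>l" using that by (auto simp: S_def not_less)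
    thus False using taul by simp
  qed
  have Sbdd: "bdd_below S" using Slow by (meson bdd_below.I less_imp_le)
  define ts where "ts = Inf S"
  have Wgt: "\<And>\<sigma>. \<sigma> > ts \<Longrightarrow> W \<sigma>"
  proof -
    fix \<sigma> assume "\<sigma> > ts"
    then obtain s where "s \<in> S" "s < \<sigma>" using cInf_less_iff[OF Sne Sbdd] unfolding ts_def by blast
    thus "W \<sigma>" by (auto simp: S_def)
  qed
  have Wts: "W ts" unfolding W_def
  proof
    fix z
    have c1: "((\<lambda>\<sigma>. v1 (z + \<sigma>)) \<longlongrightarrow> v1 (z + ts)) (at_right ts)"
      by (rule tendsto_within_subset[OF _ subset_UNIV]) (intro isCont_tendsto_compose[OF DERIV_isCont[OF DV(1)]] tendsto_intros)
    have c2: "((\<lambda>\<sigma>. v2 (z + \<sigma>)) \<longlongrightarrow> v2 (z + ts)) (at_right ts)"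
      by (rule tendsto_within_subset[OF _ subset_UNIV]) (intro isCont_tendsto_compose[OF DERIV_isCont[OF DV(3)]] tendsto_intros)
    have ev: "eventually (\<lambda>\<sigma>. W \<sigma>) (at_right ts)"
      using eventually_at_right_less[of ts] by eventually_elim (rule Wgt)
    have "u1 z \<le> v1 (z + ts)"
      by (rule tendsto_lowerbound[OF c1]) (use ev in \<open>auto elim!: eventually_mono simp: W_def\<close>)
    moreover have "v2 (z + ts) \<le> u2 z"
      by (rule tendsto_upperbound[OF c2]) (use ev in \<open>auto elim!: eventually_mono simp: W_def\<close>)
    ultimately show "u1 z \<le> v1 (z + ts) \<and> v2 (z + ts) \<le> u2 z" by simp
  qed
  show ?thesis
  proof (cases "\<exists>z0. u1 z0 = v1 (z0 + ts) \<or> v2 (z0 + ts) = u2 z0")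
    case True
    then obtain z0 where z0: "u1 z0 = v1 (z0 + ts) \<or> v2 (z0 + ts) = u2 z0" by blast
    define y1 where "y1 z = v1 (z + ts)" for z
    define y2 where "y2 z = v2 (z + ts)" for z
    define dy1 where "dy1 z = dv1 (z + ts)" for z
    define dy2 where "dy2 z = dv2 (z + ts)" for z
    have DY: "\<And>z. (y1 has_real_derivative dy1 z) (at z)"
      "\<And>z. (dy1 has_real_derivative f1 L (y1 z) (y2 z)) (at z)"
      "\<And>z. (y2 has_real_derivative dy2 z) (at z)"
      "\<And>z. (dy2 has_real_derivative f1 L (y2 z) (y1 z)) (at z)"
      unfolding y1_def y2_def dy1_def dy2_def by (simp_all add: DERIV_shift[symmetric] DV)
    have bY: "\<And>z. 0 < y1 z \<and> y1 z < 1 \<and> 0 < y2 z \<and> y2 z < 1"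
      unfolding y1_def y2_def using bV by auto
    have Wy: "\<And>z. u1 z \<le> y1 z \<and> y2 z \<le> u2 z" using Wts unfolding W_def y1_def y2_def by auto
    have m1: "\<And>t. y1 z0 - u1 z0 \<le> y1 t - u1 t" if "u1 z0 = y1 z0" using that Wy by force
    have m2: "\<And>t. u2 z0 - y2 z0 \<le> u2 t - y2 t" if "u2 z0 = y2 z0" using that Wy by force
    have D1: "\<And>z. ((\<lambda>t. y1 t - u1 t) has_real_derivative dy1 z - du1 z) (at z)"
      and D2: "\<And>z. ((\<lambda>t. u2 t - y2 t) has_real_derivative du2 z - dy2 z) (at z)"
      using DU DY by (auto intro!: DERIV_diff)
    have E: "u1 z0 = y1 z0 \<and> u2 z0 = y2 z0"
    proof (cases "u1 z0 = y1 z0")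
      case True
      have "f1 L (y1 z0) (y2 z0) - f1 L (u1 z0) (u2 z0) \<ge> 0"
        by (rule min_2nd[OF D1]) (auto intro!: DERIV_diff DU DY m1[OF True])
      hence "L * u1 z0 * (y2 z0 ^ 2 - u2 z0 ^ 2) \<ge> 0"
        using True unfolding f1_def by (simp add: algebra_simps)
      hence "y2 z0 ^ 2 - u2 z0 ^ 2 \<ge> 0" using mult_pos_pos[OF L0 bU(1)[of z0]]
        by (simp add: zero_le_mult_iff)
      hence "u2 z0 \<le> y2 z0" using bU(3)[of z0] bY[of z0]
        by (simp add: power_mono_iff)
      thus ?thesis using True Wy[of z0] by auto
    next
      case False
      hence F: "u2 z0 = y2 z0" using z0 unfolding y1_def y2_def by auto
      have "f1 L (u2 z0) (u1 z0) - f1 L (y2 z0) (y1 z0) \<ge> 0"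
        by (rule min_2nd[OF D2]) (auto intro!: DERIV_diff DU DY m2[OF F])
      hence "L * u2 z0 * (u1 z0 ^ 2 - y1 z0 ^ 2) \<ge> 0"
        using F unfolding f1_def by (simp add: algebra_simps)
      hence "u1 z0 ^ 2 - y1 z0 ^ 2 \<ge> 0" using mult_pos_pos[OF L0 bU(3)[of z0]]
        by (simp add: zero_le_mult_iff)
      hence "y1 z0 \<le> u1 z0" using bU(1)[of z0] bY[of z0]
        by (simp add: power_mono_iff)
      thus ?thesis using F Wy[of z0] by auto
    qed
    have "dy1 z0 - du1 z0 = 0"
      by (rule DERIV_local_min[OF D1 zero_less_one]) (use m1 E in auto)
    moreover have "du2 z0 - dy2 z0 = 0"
      by (rule DERIV_local_min[OF D2 zero_less_one]) (use m2 E in auto)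
    ultimately have eqs: "u1 z0 = y1 z0" "u2 z0 = y2 z0" "du1 z0 = dy1 z0" "du2 z0 = dy2 z0" using E by auto
    have "\<forall>z. u1 z = y1 z \<and> u2 z = y2 z"
    proof
      fix z show "u1 z = y1 z \<and> u2 z = y2 z"
        by (rule ode_unique[OF _ DU DY _ eqs]) (use L0 bU bY in \<open>auto simp: less_imp_le\<close>)
    qed
    thus ?thesis unfolding y1_def y2_def by blast
  next
    case False
    have strict: "\<And>z. u1 z < v1 (z + ts) \<and> v2 (z + ts) < u2 z"
      using False Wts unfolding W_def by (metis order.not_eq_order_implies_strict)
    obtain RV where RV: "RV \<ge> 0" "\<And>z. z \<ge> RV \<Longrightarrow> \<bar>v1 z - 1\<bar> < d \<and> \<bar>v2 z\<bar> < d"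
      using tails[OF V dpos] by blast
    define A where "A = - RU"
    define B where "B = max RU (RV - ts + 1)"
    have AB: "A \<le> B" using RU(1) by (simp add: A_def B_def)
    have ct: "continuous_on UNIV (\<lambda>z. v1 (z + ts))" "continuous_on UNIV (\<lambda>z. v2 (z + ts))"
      by (rule deriv_cont[of _ "\<lambda>z. dv1 (z + ts)"], simp add: DERIV_shift[symmetric] DV)
         (rule deriv_cont[of _ "\<lambda>z. dv2 (z + ts)"], simp add: DERIV_shift[symmetric] DV)
    have "\<exists>x\<in>{A..B}. \<forall>y\<in>{A..B}. v1 (x + ts) - u1 x \<le> v1 (y + ts) - u1 y"
      using AB by (intro continuous_attains_inf) (auto intro!: continuous_intros continuous_on_subset[OF ct(1)] continuous_on_subset[OF cu1])
    then obtain p1 where p1: "\<And>y. y \<in> {A..B} \<Longrightarrow> v1 (p1 + ts) - u1 p1 \<le> v1 (y + ts) - u1 y" by blast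
    have "\<exists>x\<in>{A..B}. \<forall>y\<in>{A..B}. u2 x - v2 (x + ts) \<le> u2 y - v2 (y + ts)"
      using AB by (intro continuous_attains_inf) (auto intro!: continuous_intros continuous_on_subset[OF ct(2)] continuous_on_subset[OF cu2])
    then obtain p2 where p2: "\<And>y. y \<in> {A..B} \<Longrightarrow> u2 p2 - v2 (p2 + ts) \<le> u2 y - v2 (y + ts)" by blast
    define \<mu> where "\<mu> = min (v1 (p1 + ts) - u1 p1) (u2 p2 - v2 (p2 + ts))"
    have mupos: "\<mu> > 0" using strict[of p1] strict[of p2] by (simp add: \<mu>_def)
    define T where "T = {A + ts - 1 .. B + ts}"
    have "uniformly_continuous_on T v1" "uniformly_continuous_on T v2"
      unfolding T_def by (auto intro: compact_uniformly_continuous continuous_on_subset[OF cv1] continuous_on_subset[OF cv2])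
    then obtain \<eta>1 \<eta>2 where e1: "\<eta>1 > 0" "\<And>x x'. x \<in> T \<Longrightarrow> x' \<in> T \<Longrightarrow> dist x' x < \<eta>1 \<Longrightarrow> dist (v1 x') (v1 x) < \<mu>"
      and e2: "\<eta>2 > 0" "\<And>x x'. x \<in> T \<Longrightarrow> x' \<in> T \<Longrightarrow> dist x' x < \<eta>2 \<Longrightarrow> dist (v2 x') (v2 x) < \<mu>"
      unfolding uniformly_continuous_on_def using mupos by metis
    define \<eta> where "\<eta> = min 1 (min \<eta>1 \<eta>2)"
    have eta: "\<eta> > 0" "\<eta> \<le> 1" "\<eta> \<le> \<eta>1" "\<eta> \<le> \<eta>2" using e1 e2 by (auto simp: \<eta>_def)
    have Wnear: "W \<sigma>" if \<sigma>: "ts - \<eta>/2 \<le> \<sigma>" "\<sigma> \<le> ts" for \<sigma>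
      unfolding W_def
    proof
      fix z
      show "u1 z \<le> v1 (z + \<sigma>) \<and> v2 (z + \<sigma>) \<le> u2 z"
      proof (rule comparison[OF L dpos d1 d2 U adm_shift[OF V, of \<sigma>], of A B])
        fix t assume t: "A \<le> t" "t \<le> B"
        have inT: "t + \<sigma> \<in> T" "t + ts \<in> T" using t \<sigma> eta by (auto simp: T_def)
        have ds: "dist (t + \<sigma>) (t + ts) < \<eta>1" "dist (t + \<sigma>) (t + ts) < \<eta>2"
          using \<sigma> eta by (auto simp: dist_real_def)
        have "\<bar>v1 (t + \<sigma>) - v1 (t + ts)\<bar> < \<mu>" using e1(2)[OF inT(2,1) ds(1)] by (simp add: dist_real_def)
        moreover have "\<bar>v2 (t + \<sigma>) - v2 (t + ts)\<bar> < \<mu>" using e2(2)[OF inT(2,1) ds(2)] by (simp add: dist_real_def)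
        moreover have "\<mu> \<le> v1 (t + ts) - u1 t" using p1[of t] t by (simp add: \<mu>_def)
        moreover have "\<mu> \<le> u2 t - v2 (t + ts)" using p2[of t] t by (simp add: \<mu>_def)
        ultimately show "u1 t < v1 (t + \<sigma>) \<and> v2 (t + \<sigma>) < u2 t" by auto
      next
        fix t assume "t < A" thus "\<bar>u1 t\<bar> \<le> d \<and> \<bar>u2 t - 1\<bar> \<le> d" using RU(2)[of t] by (auto simp: A_def)
      next
        fix t assume t: "t > B"
        have "t + \<sigma> \<ge> RV" using t \<sigma> eta by (simp add: B_def)
        hence "\<bar>v1 (t + \<sigma>) - 1\<bar> < d \<and> \<bar>v2 (t + \<sigma>)\<bar> < d" using RV by blast
        moreover have "t \<ge> RU" using t by (simp add: B_def)
        ultimately show "\<bar>u1 t - 1\<bar> \<le> d \<and> \<bar>u2 t\<bar> \<le> d \<and> \<bar>v1 (t + \<sigma>) - 1\<bar> \<le> d \<and> \<bar>v2 (t + \<sigma>)\<bar> \<le> d"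
          using RU(3)[of t] by auto
      qed
    qed
    have "ts - \<eta>/2 \<in> S" unfolding S_def
    proof (intro CollectI allI impI)
      fix \<sigma> assume "\<sigma> \<ge> ts - \<eta>/2"
      show "W \<sigma>"
      proof (cases "\<sigma> \<le> ts")
        case True thus ?thesis using Wnear \<open>\<sigma> \<ge> ts - \<eta>/2\<close> by blast
      next
        case False thus ?thesis using Wgt by simp
      qed
    qed
    hence "ts \<le> ts - \<eta>/2" unfolding ts_def using Sbdd by (rule cInf_lower)
    thus ?thesis using eta by simp
  qed
qed

end
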